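(* Let $p\ge 1$, let $F:\mathbb{R}^p\to\mathbb{R}^p$ and $G(\boldsymbol{x}) := F(\boldsymbol{x})-\boldsymbol{x}$. Let $\boldsymbol{x}^\ast\in\mathbb{R}^p$ and let $M\in\mathbb{R}^{p\times p}$ be a fixed non-singular symmetric matrix defining $\|A\|_M := \|MAM\|_F$. Assume: (A1) $G$ is differentiable in an open convex set $D$ containing $\boldsymbol{x}^\ast$, $G(\boldsymbol{x}^\ast)=0$, $dG(\boldsymbol{x}^\ast)$ is non-singular, and for some constants $d>0$ and $K$ we have $\|dG(\boldsymbol{x})-dG(\boldsymbol{x}^\ast)\|\le K\|\boldsymbol{x}-\boldsymbol{x}^\ast\|^d$ for all $\boldsymbol{x}\in D$. (A2) There are a neighborhood $N_1$ of $\boldsymbol{x}^\ast$ with $N_1\subset D\cap S$ on which the update $\bar{\boldsymbol{x}}=\boldsymbol{x}-HG(\boldsymbol{x})$ is well-defined, a neighborhood $N_2$ of $dG(\boldsymbol{x}^\ast)^{-1}$ consisting of non-singular matrices on which the update $H\mapsto\bar H$ is well-defined, and non-negative constants $\alpha_1,\alpha_2$ such that for every $(\boldsymbol{x},H)\in N_1\times N_2$, $$\|\bar H-dG(\boldsymbol{x}^\ast)^{-1}\|_M\le\Big[1+\alpha_1\max\{\|F(\boldsymbol{x})-\boldsymbol{x}^\ast\|^d,\|\boldsymbol{x}-\boldsymbol{x}^\ast\|^d\}\Big]\|H-dG(\boldsymbol{x}^\ast)^{-1}\|_M+\alpha_2\max\{\|F(\boldsymbol{x})-\boldsymbol{x}^\ast\|^d,\|\boldsymbol{x}-\boldsymbol{x}^\ast\|^d\}.$$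 Then for each $r\in(0,1)$ there exist positive constants $\epsilon(r)$ and $\delta(r)$ such that whenever $\|\boldsymbol{x}_0-\boldsymbol{x}^\ast\|<\epsilon(r)$ and $\|H_0-dG(\boldsymbol{x}^\ast)^{-1}\|_M<\delta(r)$, the sequence defined by $\boldsymbol{x}_{k+1}=\boldsymbol{x}_k-H_kG(\boldsymbol{x}_k)$, $H_{k+1}=\bar H$ evaluated at $(\boldsymbol{x}_k,H_k)$, is well-defined and converges to $\boldsymbol{x}^\ast$. Furthermore $\|\boldsymbol{x}_{k+1}-\boldsymbol{x}^\ast\|\le r\|\boldsymbol{x}_k-\boldsymbol{x}^\ast\|$ for each $k\ge 0$, and the sequences $\{\|H_k\|\}$ and $\{\|H_k^{-1}\|\}$ are uniformly bounded.
   Context: $F$ is a majorization–minimization (MM) algorithm map and $G(\boldsymbol{x})=F(\boldsymbol{x})-\boldsymbol{x}$ its residual; $dG$ denotes the Jacobian of $G$. $\|\cdot\|$ is a chosen vector norm on $\mathbb{R}^p$ and, for matrices, its induced operator norm; $\|\cdot\|_F$ is the Frobenius norm. Standing assumption: the MM map is locally convergent to $\boldsymbol{x}^\ast$ in a neighborhood $S$ of $\boldsymbol{x}^\ast$ with linear rate $\tau$, i.e. $\|F(\boldsymbol{x})-\boldsymbol{x}^\ast\|\le\tau\|\boldsymbol{x}-\boldsymbol{x}^\ast\|$ for all $\boldsymbol{x}\in S$, with $\tau\in(0,1)$. For a pair $(\boldsymbol{x},H)$ with $\boldsymbol{x}\in\mathbb{R}^p$, $H\in\mathbb{R}^{p\times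 p}$, define $\boldsymbol{u}=F(\boldsymbol{x})-\boldsymbol{x}$, $\boldsymbol{v}=G(F(\boldsymbol{x}))-G(\boldsymbol{x})$, and the updates $\bar{\boldsymbol{x}}=\boldsymbol{x}-HG(\boldsymbol{x})$ and $\bar H=H-H\frac{\boldsymbol{v}\boldsymbol{v}^T}{\boldsymbol{v}^T\boldsymbol{v}}+\frac{\boldsymbol{u}\boldsymbol{v}^T}{\boldsymbol{v}^T\boldsymbol{v}}$ (defined when $\boldsymbol{v}\neq 0$). *)

theory Defs
  imports "HOL-Analysis.Analysis"
begin

definition is_vnorm :: "(real^'n \<Rightarrow> real) \<Rightarrow> bool" where
  "is_vnorm nv \<longleftrightarrow>
     (\<forall>x. 0 \<le> nv x) \<and> (\<forall>x. nv x = 0 \<longleftrightarrow> x = 0) \<and>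
     (\<forall>c x. nv (c *\<^sub>R x) = \<bar>c\<bar> * nv x) \<and>
     (\<forall>x y. nv (x + y) \<le> nv x + nv y)"

definition opnorm :: "(real^'n \<Rightarrow> real) \<Rightarrow> real^'n^'n \<Rightarrow> real" where
  "opnorm nv A = Sup ((\<lambda>x. nv (A *v x)) ` {x. nv x = 1})"

definition frob :: "real^'n^'n \<Rightarrow> real" where
  "frob A = sqrt (\<Sum>i\<in>UNIV. \<Sum>j\<in>UNIV. (A $ i $ j)\<^sup>2)"

definition normM :: "real^'n^'n \<Rightarrow> real^'n^'n \<Rightarrow> real" where
  "normM M A = frob (M ** A ** M)"

definition outer :: "real^'n \<Rightarrow> real^'n \<Rightarrow> real^'n^'n" where
  "outer u v = (\<chi> i j. u $ i * v $ j)"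

definition resid :: "(real^'n \<Rightarrow> real^'n) \<Rightarrow> real^'n \<Rightarrow> real^'n" where
  "resid F x = F x - x"

definition uvec :: "(real^'n \<Rightarrow> real^'n) \<Rightarrow> real^'n \<Rightarrow> real^'n" where
  "uvec F x = F x - x"

definition vvec :: "(real^'n \<Rightarrow> real^'n) \<Rightarrow> real^'n \<Rightarrow> real^'n" where
  "vvec F x = resid F (F x) - resid F x"

text \<open>Matrix update  Hbar = H - H v v^T/(v^T v) + u v^T/(v^T v).
  (When v = 0, Isabelle's convention 1/0 = 0 gives Hbar = H; this case only
  arises at points where the update is not defined in the paper.)\<close>
definition Hbar :: "(real^'n \<Rightarrow> real^'n) \<Rightarrow> real^'n \<Rightarrow> real^'n^'n \<Rightarrow> real^'n^'n" where
  "Hbar F x H =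
     (let u = uvec F x; v = vvec F x
      in H - (1 / (v \<bullet> v)) *\<^sub>R (H ** outer v v) + (1 / (v \<bullet> v)) *\<^sub>R outer u v)"

primrec qn_iter :: "(real^'n \<Rightarrow> real^'n) \<Rightarrow> real^'n \<Rightarrow> real^'n^'n \<Rightarrow> nat
                     \<Rightarrow> (real^'n) \<times> (real^'n^'n)" where
  "qn_iter F x0 H0 0 = (x0, H0)"
| "qn_iter F x0 H0 (Suc k) =
     (let (x, H) = qn_iter F x0 H0 k in (x - H *v resid F x, Hbar F x H))"

end

theory Submission
  imports Defs
begin

lemma minv: "invertible (A::real^'n^'n) \<Longrightarrow> A ** matrix_inv A = mat 1 \<and> matrix_inv A ** A = mat 1"
  unfolding invertible_def matrix_inv_def by (rule someI_ex)

lemma frob_entry: "\<bar>(A::real^'n^'n) $ i $ j\<bar> \<le> frob A"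
proof -
  have "(A$i$j)\<^sup>2 \<le> (\<Sum>j'\<in>UNIV. (A $ i $ j')\<^sup>2)"
    by (rule member_le_sum) auto
  also have "\<dots> \<le> (\<Sum>i'\<in>UNIV. \<Sum>j'\<in>UNIV. (A $ i' $ j')\<^sup>2)"
    by (rule member_le_sum[where f="\<lambda>i'. \<Sum>j'\<in>UNIV. (A $ i' $ j')\<^sup>2"]) (auto intro: sum_nonneg)
  finally show ?thesis unfolding frob_def by (metis power2_abs real_le_rsqrt)
qed

lemma frob_nonneg: "0 \<le> frob A"
  unfolding frob_def by (auto intro!: sum_nonneg)

lemma mv_bound: "norm ((A::real^'n^'n) *v x) \<le> real CARD('n)^2 * frob A * norm x"
proof -
  have "norm (A *v x) \<le> onorm ((*v) A) * norm x"
    by (rule onorm) (simp add: matrix_vector_mul_bounded_linear)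
  also have "onorm ((*v) A) \<le> (\<Sum>i\<in>UNIV. \<Sum>j\<in>UNIV. \<bar>A $ i $ j\<bar>)"
    by (rule onorm_le_matrix_component_sum)
  also have "\<dots> \<le> (\<Sum>i\<in>(UNIV::'n set). \<Sum>j\<in>(UNIV::'n set). frob A)"
    by (intro sum_mono frob_entry)
  also have "\<dots> = real CARD('n)^2 * frob A" by (simp add: power2_eq_square)
  finally show ?thesis by (simp add: mult_right_mono)
qed

lemma vnorm_basic:
  assumes "is_vnorm nv"
  shows "nv 0 = 0" "nv (x - y) = nv (y - x)" "nv (- x) = nv x" "0 \<le> nv x"
    "nv (x - y) \<le> nv (x - z) + nv (z - y)" "nv x - nv y \<le> nv (x - y)"
proof -
  have s: "\<And>c x. nv (c *\<^sub>R x) = \<bar>c\<bar> * nv x" and t: "\<And>x y. nv (x + y) \<le> nv x + nv y"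
    using assms unfolding is_vnorm_def by auto
  show "nv 0 = 0" using assms unfolding is_vnorm_def by auto
  show m: "nv (- x) = nv x" using s[of "-1" x] by simp
  show "nv (x - y) = nv (y - x)" using s[of "-1" "x - y"] by simp
  show "0 \<le> nv x" using assms unfolding is_vnorm_def by auto
  show "nv (x - y) \<le> nv (x - z) + nv (z - y)" using t[of "x - z" "z - y"] by simp
  show "nv x - nv y \<le> nv (x - y)" using t[of "x - y" y] by simp
qed

lemma vnorm_sum:
  assumes "is_vnorm nv" "finite A"
  shows "nv (sum f A) \<le> (\<Sum>i\<in>A. nv (f i))"
  using assms(2)
proof (induction A rule: finite_induct)
  case empty then show ?case using vnorm_basic[OF assms(1)] by simp
next
  case (insert a A)
  have "nv (f a + sum f A) \<le> nv (f a) + nv (sum f A)"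
    using assms(1) unfolding is_vnorm_def by blast
  then show ?case using insert by simp
qed

lemma vnorm_upper:
  assumes "is_vnorm nv"
  shows "nv x \<le> (\<Sum>b\<in>Basis. nv b) * norm (x::real^'n)"
proof -
  have "nv x = nv (\<Sum>b\<in>Basis. (x \<bullet> b) *\<^sub>R b)" by (simp add: euclidean_representation)
  also have "\<dots> \<le> (\<Sum>b\<in>Basis. nv ((x \<bullet> b) *\<^sub>R b))" by (rule vnorm_sum[OF assms]) simp
  also have "\<dots> = (\<Sum>b\<in>Basis. \<bar>x \<bullet> b\<bar> * nv b)"
    using assms unfolding is_vnorm_def by simp
  also have "\<dots> \<le> (\<Sum>b\<in>Basis. norm x * nv b)"
    by (intro sum_mono mult_right_mono Basis_le_norm) (use vnorm_basic[OF assms] in auto)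
  also have "\<dots> = (\<Sum>b\<in>Basis. nv b) * norm x" by (simp add: sum_distrib_left mult.commute)
  finally show ?thesis .
qed

lemma vnorm_equiv:
  assumes "is_vnorm nv"
  shows "\<exists>c C. 0 < c \<and> 0 < C \<and> (\<forall>x::real^'n. c * norm x \<le> nv x \<and> nv x \<le> C * norm x)"
proof -
  define C where "C = (\<Sum>b\<in>Basis. nv b) + 1"
  have up: "nv x \<le> C * norm x" for x :: "real^'n"
    using vnorm_upper[OF assms, of x] norm_ge_zero[of x] unfolding C_def distrib_right by linarith
  have C0: "0 < C" unfolding C_def using vnorm_basic(4)[OF assms] by (simp add: sum_nonneg add_nonneg_pos)
  have "continuous_on (sphere (0::real^'n) 1) nv"
  proof (rule continuous_at_imp_continuous_on, intro ballI)
    fix x :: "real^'n"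
    show "isCont nv x"
    proof (rule continuous_at_eps_delta[THEN iffD2], intro allI impI)
      fix e :: real assume "e > 0"
      show "\<exists>d>0. \<forall>y. dist y x < d \<longrightarrow> dist (nv y) (nv x) < e"
      proof (intro exI[of _ "e / C"] conjI allI impI)
        show "e / C > 0" using \<open>e>0\<close> C0 by simp
        fix y assume "dist y x < e / C"
        have "\<bar>nv y - nv x\<bar> \<le> nv (y - x)"
          using vnorm_basic(6)[OF assms, of y x] vnorm_basic(6)[OF assms, of x y] vnorm_basic(2)[OF assms, of x y] by linarith
        also have "\<dots> \<le> C * norm (y - x)" by (rule up)
        also have "\<dots> < e" using \<open>dist y x < e / C\<close> C0 by (simp add: dist_norm field_simps)
        finally show "dist (nv y) (nv x) < e" by (simp add: dist_real_def)
      qed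
    qed
  qed
  moreover have "sphere (0::real^'n) 1 \<noteq> {}"
  proof -
    obtain b :: "real^'n" where "b \<in> Basis" using nonempty_Basis by blast
    then show ?thesis by (auto intro!: exI[of _ b])
  qed
  ultimately obtain z where z: "z \<in> sphere 0 1" "\<forall>y\<in>sphere (0::real^'n) 1. nv z \<le> nv y"
    using continuous_attains_inf[OF compact_sphere] by blast
  have c0: "nv z > 0" using z(1) assms unfolding is_vnorm_def
    by (metis dual_order.order_iff_strict mem_sphere_0 norm_zero zero_neq_one)
  have lo: "nv z * norm x \<le> nv x" for x :: "real^'n"
  proof (cases "x = 0")
    case True then show ?thesis using vnorm_basic[OF assms] by simp
  next
    case False
    have "(1 / norm x) *\<^sub>R x \<in> sphere 0 1" using False by simp
    then have "nv z \<le> nv ((1 / norm x) *\<^sub>R x)" using z(2) by blast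
    also have "\<dots> = nv x / norm x" using assms unfolding is_vnorm_def by simp
    finally show ?thesis using False by (simp add: field_simps)
  qed
  show ?thesis using up lo c0 C0 by blast
qed

lemma opnorm_le:
  fixes A :: "real^'n^'n"
  assumes "is_vnorm nv" "\<forall>x. nv (A *v x) \<le> B * nv x"
  shows "opnorm nv A \<le> B"
  unfolding opnorm_def
proof (rule cSup_least)
  obtain b :: "real^'n" where b: "b \<in> Basis" using nonempty_Basis by blast
  then have nb: "b \<noteq> 0" by (simp add: nonzero_Basis)
  then have "nv b > 0" using assms(1) unfolding is_vnorm_def by (metis less_eq_real_def)
  then have "nv ((1 / nv b) *\<^sub>R b) = 1" using assms(1) nb unfolding is_vnorm_def by simp
  then show "(\<lambda>x. nv (A *v x)) ` {x. nv x = 1} \<noteq> {}" by blast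
  fix y assume "y \<in> (\<lambda>x. nv (A *v x)) ` {x. nv x = 1}"
  then obtain x where "nv x = 1" "y = nv (A *v x)" by blast
  then show "y \<le> B" using assms(2)[rule_format, of x] by simp
qed

lemma dev_bound:
  assumes "invertible (M::real^'n^'n)"
  shows "\<exists>\<kappa>>0. \<forall>A x. norm (A *v x) \<le> \<kappa> * normM M A * norm x"
proof -
  define Mi where "Mi = matrix_inv M"
  define L where "L = real CARD('n)^2 * frob Mi + 1"
  define \<kappa> where "\<kappa> = L * (real CARD('n)^2) * L"
  have L0: "L > 0" unfolding L_def by (simp add: add_nonneg_pos frob_nonneg)
  have Lb: "norm (Mi *v y) \<le> L * norm y" for y
    using mv_bound[of Mi y] norm_ge_zero[of y] unfolding L_def distrib_right by linarith
  have "norm (A *v x) \<le> \<kappa> * normM M A * norm x" for A x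
  proof -
    have "Mi ** (M ** A ** M) ** Mi = (Mi ** M) ** A ** (M ** Mi)"
      by (simp add: matrix_mul_assoc)
    then have "A = Mi ** (M ** A ** M) ** Mi" using minv[OF assms] unfolding Mi_def
      by (simp add: matrix_mul_lid matrix_mul_rid)
    then have "A *v x = Mi *v ((M ** A ** M) *v (Mi *v x))"
      by (metis matrix_vector_mul_assoc)
    then have "norm (A *v x) \<le> L * norm ((M ** A ** M) *v (Mi *v x))" using Lb by simp
    also have "\<dots> \<le> L * (real CARD('n)^2 * normM M A * norm (Mi *v x))"
      using mv_bound[of "M ** A ** M" "Mi *v x"] L0 unfolding normM_def by simp
    also have "\<dots> \<le> L * (real CARD('n)^2 * normM M A * (L * norm x))"
      using Lb L0 by (intro mult_left_mono) (auto simp: normM_def frob_nonneg)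
    finally show ?thesis unfolding \<kappa>_def by (simp add: ac_simps)
  qed
  moreover have "\<kappa> > 0" unfolding \<kappa>_def using L0 by simp
  ultimately show ?thesis by blast
qed

lemma mat_bound:
  assumes "invertible (M::real^'n^'n)"
  shows "\<exists>\<kappa>>0. \<forall>A. norm A \<le> \<kappa> * normM M A"
proof -
  obtain k where k: "k > 0" "\<forall>A x. norm (A *v x) \<le> k * normM M A * norm x"
    using dev_bound[OF assms] by blast
  have "norm A \<le> (real CARD('n)^2 * k) * normM M A" for A :: "real^'n^'n"
  proof -
    have e: "\<bar>A $ i $ j\<bar> \<le> k * normM M A" for i j
    proof -
      have "A $ i $ j = (A *v axis j 1) $ i" by (simp add: matrix_vector_mul_component axis_def inner_vec_def if_distrib cong: if_cong)
      then have "\<bar>A $ i $ j\<bar> \<le> norm (A *v axis j 1)" by (metis component_le_norm_cart)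
      also have "\<dots> \<le> k * normM M A" using k(2)[rule_format, of A "axis j 1"] by simp
      finally show ?thesis .
    qed
    have "norm A \<le> (\<Sum>i\<in>UNIV. norm (A $ i))" unfolding norm_vec_def by (rule L2_set_le_sum) simp
    also have "\<dots> \<le> (\<Sum>i\<in>UNIV. \<Sum>j\<in>UNIV. \<bar>A $ i $ j\<bar>)" by (intro sum_mono norm_le_l1_cart)
    also have "\<dots> \<le> (\<Sum>i\<in>(UNIV::'n set). \<Sum>j\<in>(UNIV::'n set). k * normM M A)" by (intro sum_mono e)
    finally show ?thesis by (simp add: power2_eq_square)
  qed
  then show ?thesis using k(1) by (intro exI[of _ "real CARD('n)^2 * k"]) simp
qed

theorem theorem1:
  fixes F :: "real^'n \<Rightarrow> real^'n"
    and nv :: "real^'n \<Rightarrow> real"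
    and xs :: "real^'n"
    and S D N1 :: "(real^'n) set"
    and N2 :: "(real^'n^'n) set"
    and J :: "real^'n \<Rightarrow> real^'n^'n"
    and M :: "real^'n^'n"
    and \<tau> d K \<alpha>1 \<alpha>2 :: real
  assumes nv: "is_vnorm nv"
    and MM_S: "xs \<in> interior S"
    and MM_tau: "0 < \<tau>" "\<tau> < 1"
    and MM_rate: "\<forall>x\<in>S. nv (F x - xs) \<le> \<tau> * nv (x - xs)"
    and M_sym: "transpose M = M" and M_inv: "invertible M"
    and A1_D: "open D" "convex D" "xs \<in> D"
    and A1_deriv: "\<forall>x\<in>D. (resid F has_derivative (\<lambda>h. J x *v h)) (at x)"
    and A1_zero: "resid F xs = 0"
    and A1_inv: "invertible (J xs)"
    and A1_d: "d > 0"
    and A1_lip: "\<forall>x\<in>D. opnorm nv (J x - J xs) \<le> K * nv (x - xs) powr d"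
    and A2_N1: "xs \<in> interior N1" "N1 \<subseteq> D \<inter> S"
    and A2_N2: "matrix_inv (J xs) \<in> interior N2" "\<forall>H\<in>N2. invertible H"
    and A2_welldef: "\<forall>x\<in>N1. x \<noteq> xs \<longrightarrow> vvec F x \<noteq> 0"
    and A2_alpha: "\<alpha>1 \<ge> 0" "\<alpha>2 \<ge> 0"
    and A2_ineq: "\<forall>x\<in>N1. \<forall>H\<in>N2.
        normM M (Hbar F x H - matrix_inv (J xs))
          \<le> (1 + \<alpha>1 * max (nv (F x - xs) powr d) (nv (x - xs) powr d))
               * normM M (H - matrix_inv (J xs))
            + \<alpha>2 * max (nv (F x - xs) powr d) (nv (x - xs) powr d)"
  shows "\<forall>r. 0 < r \<and> r < 1 \<longrightarrow>
    (\<exists>\<epsilon>>0. \<exists>\<delta>>0. \<forall>x0 H0.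
       nv (x0 - xs) < \<epsilon> \<and> normM M (H0 - matrix_inv (J xs)) < \<delta> \<longrightarrow>
         (\<forall>k. fst (qn_iter F x0 H0 k) \<in> N1 \<and> snd (qn_iter F x0 H0 k) \<in> N2)
       \<and> (\<lambda>k. fst (qn_iter F x0 H0 k)) \<longlonglongrightarrow> xs
       \<and> (\<forall>k. nv (fst (qn_iter F x0 H0 (Suc k)) - xs) \<le> r * nv (fst (qn_iter F x0 H0 k) - xs))
       \<and> (\<exists>B. \<forall>k. opnorm nv (snd (qn_iter F x0 H0 k)) \<le> B
                 \<and> opnorm nv (matrix_inv (snd (qn_iter F x0 H0 k))) \<le> B))"
proof (intro allI impI)
  fix r :: real
  assume r: "0 < r \<and> r < 1"
  define G where "G = resid F"
  define J0 where "J0 = J xs"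
  define Ji where "Ji = matrix_inv J0"
  have JJ: "J0 ** Ji = mat 1" "Ji ** J0 = mat 1" using minv[OF A1_inv] unfolding J0_def Ji_def by auto
  obtain c C where cC: "0 < c" "0 < C" "\<And>x. c * norm x \<le> nv x" "\<And>x. nv x \<le> C * norm x"
    using vnorm_equiv[OF nv] by blast
  obtain \<kappa> where \<kappa>: "\<kappa> > 0" "\<And>A x. norm (A *v x) \<le> \<kappa> * normM M A * norm x"
    using dev_bound[OF M_inv] by blast
  obtain \<kappa>m where \<kappa>m: "\<kappa>m > 0" "\<And>A. norm A \<le> \<kappa>m * normM M A"
    using mat_bound[OF M_inv] by blast
  have nM0: "\<And>A. 0 \<le> normM M A" unfolding normM_def by (rule frob_nonneg)
  define nJ where "nJ = real CARD('n)^2 * frob J0 + 1"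
  define nJi where "nJi = real CARD('n)^2 * frob Ji + 1"
  have nJ0: "nJ > 0" "nJi > 0" unfolding nJ_def nJi_def by (simp_all add: add_nonneg_pos frob_nonneg)
  have nJb: "\<And>y. norm (J0 *v y) \<le> nJ * norm y"
    using mv_bound norm_ge_zero unfolding nJ_def distrib_right by (smt (verit))
  have nJib: "\<And>y. norm (Ji *v y) \<le> nJi * norm y"
    using mv_bound norm_ge_zero unfolding nJi_def distrib_right by (smt (verit))
  have nv0: "\<And>x. 0 \<le> nv x" using nv unfolding is_vnorm_def by blast
  obtain \<rho>2 where \<rho>2: "\<rho>2 > 0" "ball Ji \<rho>2 \<subseteq> N2" using A2_N2(1) unfolding Ji_def J0_def mem_interior by blast
  obtain s1 where s1: "s1 > 0" "ball xs s1 \<subseteq> N1" using A2_N1(1) unfolding mem_interior by blast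
  define \<delta>0 where "\<delta>0 = min (min 1 (\<rho>2 / (2 * \<kappa>m))) (min (r * c / (2 * C * \<kappa> * nJ)) (1 / (2 * \<kappa> * nJ)))"
  have \<delta>0: "0 < \<delta>0" "\<delta>0 \<le> 1" "\<delta>0 \<le> \<rho>2 / (2 * \<kappa>m)" "\<delta>0 \<le> r * c / (2 * C * \<kappa> * nJ)"
      "\<delta>0 \<le> 1 / (2 * \<kappa> * nJ)"
    unfolding \<delta>0_def using \<rho>2 \<kappa>m \<kappa> r cC nJ0 by auto
  define \<rho> where "\<rho> = r * c / (2 * C * (nJi + \<kappa>))"
  have \<rho>0: "\<rho> > 0" unfolding \<rho>_def using r cC nJ0 \<kappa> by simp
  have der: "(G has_derivative (\<lambda>h. J0 *v h)) (at xs)"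
    using A1_deriv A1_D(3) unfolding G_def J0_def by blast
  obtain s where s: "s > 0" "\<And>y. norm (y - xs) < s \<Longrightarrow> norm (G y - G xs - J0 *v (y - xs)) \<le> \<rho> * norm (y - xs)"
    using der[unfolded has_derivative_at_alt] \<rho>0 by blast
  have G0: "G xs = 0" using A1_zero unfolding G_def .
  define q where "q = r powr d"
  have q: "0 < q" "q < 1" unfolding q_def using r A1_d
    by (auto intro: order.strict_trans2[OF powr_less_mono2[of d r 1]])
  define \<gamma> where "\<gamma> = \<alpha>1 + \<alpha>2"
  have \<gamma>0: "\<gamma> \<ge> 0" unfolding \<gamma>_def using A2_alpha by simp
  define a where "a = \<delta>0 / 3"
  define t where "t = a / (1 + a)"
  define \<delta> where "\<delta> = min 1 a"
  have a0: "a > 0" unfolding a_def using \<delta>0 by simp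
  have t0: "0 < t" "t < 1" unfolding t_def using a0 by auto
  have expt: "exp t \<le> 1 + a"
  proof -
    have "1 - t \<le> exp (- t)" using exp_ge_add_one_self[of "-t"] by simp
    moreover have "1 - t = 1 / (1 + a)" unfolding t_def using a0 by (simp add: field_simps)
    ultimately have "1 / (1 + a) \<le> 1 / exp t" by (simp add: exp_minus inverse_eq_divide)
    then show ?thesis using a0 by (simp add: field_simps)
  qed
  define y0 where "y0 = t * (1 - q) / (\<gamma> + 1)"
  have y0: "y0 > 0" unfolding y0_def using t0 q \<gamma>0 by simp
  define \<epsilon> where "\<epsilon> = min (c * min s s1) (y0 powr (1 / d))"
  have \<epsilon>: "\<epsilon> > 0" "\<epsilon> \<le> c * min s s1" "\<epsilon> \<le> y0 powr (1 / d)"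
    unfolding \<epsilon>_def using cC s s1 y0 by auto
  show "\<exists>\<epsilon>>0. \<exists>\<delta>>0. \<forall>x0 H0.
       nv (x0 - xs) < \<epsilon> \<and> normM M (H0 - matrix_inv (J xs)) < \<delta> \<longrightarrow>
         (\<forall>k. fst (qn_iter F x0 H0 k) \<in> N1 \<and> snd (qn_iter F x0 H0 k) \<in> N2)
       \<and> (\<lambda>k. fst (qn_iter F x0 H0 k)) \<longlonglongrightarrow> xs
       \<and> (\<forall>k. nv (fst (qn_iter F x0 H0 (Suc k)) - xs) \<le> r * nv (fst (qn_iter F x0 H0 k) - xs))
       \<and> (\<exists>B. \<forall>k. opnorm nv (snd (qn_iter F x0 H0 k)) \<le> B
                 \<and> opnorm nv (matrix_inv (snd (qn_iter F x0 H0 k))) \<le> B)"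
  proof (rule exI[of _ \<epsilon>], rule conjI[OF \<epsilon>(1)], rule exI[of _ \<delta>], intro conjI allI impI)
    show "\<delta> > 0" unfolding \<delta>_def using a0 by simp
    fix x0 H0
    assume init: "nv (x0 - xs) < \<epsilon> \<and> normM M (H0 - matrix_inv (J xs)) < \<delta>"
    define e0 where "e0 = nv (x0 - xs)"
    define \<eta>0 where "\<eta>0 = normM M (H0 - Ji)"
    define E where "E = e0 powr d"
    have e0: "e0 < \<epsilon>" "0 \<le> e0" using init nv0 unfolding e0_def by auto
    have \<eta>0: "\<eta>0 < \<delta>" "0 \<le> \<eta>0" using init nM0 unfolding \<eta>0_def Ji_def J0_def by auto
    have E0: "0 \<le> E" unfolding E_def by simp
    have Ey: "E \<le> y0"
    proof -
      have "E \<le> (y0 powr (1 / d)) powr d" unfolding E_def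
        using e0 \<epsilon>(3) A1_d by (intro powr_mono2) auto
      also have "\<dots> = y0" using A1_d y0 by (simp add: powr_powr)
      finally show ?thesis .
    qed
    have step: "x \<in> N1 \<and> H \<in> N2 \<and> nv (x - H *v G x - xs) \<le> r * nv (x - xs)
        \<and> normM M (Hbar F x H - Ji) \<le> (1 + \<alpha>1 * nv (x - xs) powr d) * normM M (H - Ji) + \<alpha>2 * nv (x - xs) powr d"
      if hx: "nv (x - xs) \<le> e0" and hH: "normM M (H - Ji) \<le> \<delta>0" for x H
    proof -
      define w where "w = x - xs"
      define \<eta> where "\<eta> = normM M (H - Ji)"
      have \<eta>: "0 \<le> \<eta>" "\<eta> \<le> \<delta>0" using hH nM0 unfolding \<eta>_def by auto
      have nw: "norm w < min s s1"
      proof -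
        have "c * norm w \<le> nv w" by (rule cC(3))
        also have "\<dots> < c * min s s1" using hx e0 \<epsilon>(2) unfolding w_def by simp
        finally show ?thesis using cC(1) by simp
      qed
      have xN1: "x \<in> N1" using s1(2) nw unfolding w_def by (auto simp: dist_norm norm_minus_commute)
      have "norm (H - Ji) \<le> \<kappa>m * \<eta>" using \<kappa>m(2) unfolding \<eta>_def by blast
      also have "\<dots> \<le> \<kappa>m * \<delta>0" using \<eta> \<kappa>m(1) by simp
      also have "\<dots> \<le> \<kappa>m * (\<rho>2 / (2 * \<kappa>m))" using \<delta>0(3) \<kappa>m(1) by (intro mult_left_mono) auto
      also have "\<dots> < \<rho>2" using \<kappa>m(1) \<rho>2(1) by simp
      finally have HN2: "H \<in> N2" using \<rho>2(2) by (auto simp: dist_norm norm_minus_commute)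
      define R where "R = G x - J0 *v w"
      have nR: "norm R \<le> \<rho> * norm w" using s(2)[of x] nw G0 unfolding R_def w_def by simp
      have z: "x - H *v G x - xs = - ((H - Ji) *v (J0 *v w)) - (Ji *v R) - ((H - Ji) *v R)"
      proof -
        have "Ji *v (J0 *v w) = w" using JJ(2) by (simp add: matrix_vector_mul_assoc)
        then show ?thesis unfolding R_def w_def
          by (simp add: matrix_vector_mult_diff_rdistrib matrix_vector_right_distrib algebra_simps)
      qed
      have t1: "norm ((H - Ji) *v (J0 *v w)) \<le> \<kappa> * \<delta>0 * nJ * norm w"
      proof -
        have "norm ((H - Ji) *v (J0 *v w)) \<le> \<kappa> * \<eta> * norm (J0 *v w)" using \<kappa>(2) unfolding \<eta>_def by blast
        also have "\<dots> \<le> \<kappa> * \<delta>0 * (nJ * norm w)"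
          using \<eta> \<kappa>(1) nJb[of w] by (intro mult_mono) auto
        finally show ?thesis by (simp add: ac_simps)
      qed
      have t2: "norm (Ji *v R) \<le> nJi * \<rho> * norm w"
        using nJib[of R] nR nJ0 by (smt (verit) mult.assoc mult_left_mono)
      have t3: "norm ((H - Ji) *v R) \<le> \<kappa> * \<delta>0 * \<rho> * norm w"
      proof -
        have "norm ((H - Ji) *v R) \<le> \<kappa> * \<eta> * norm R" using \<kappa>(2) unfolding \<eta>_def by blast
        also have "\<dots> \<le> \<kappa> * \<delta>0 * (\<rho> * norm w)"
          using \<eta> \<kappa>(1) nR by (intro mult_mono) auto
        finally show ?thesis by (simp add: ac_simps)
      qed
      define K1 where "K1 = \<kappa> * \<delta>0 * nJ + (nJi + \<kappa> * \<delta>0) * \<rho>"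
      have nz: "norm (x - H *v G x - xs) \<le> K1 * norm w"
      proof -
        have "norm (x - H *v G x - xs) \<le> norm ((H - Ji) *v (J0 *v w)) + norm (Ji *v R) + norm ((H - Ji) *v R)"
          unfolding z by (smt (verit) norm_minus_cancel norm_triangle_ineq4 norm_triangle_ineq)
        then show ?thesis using t1 t2 t3 unfolding K1_def by (simp add: algebra_simps)
      qed
      have K1: "C * K1 \<le> r * c"
      proof -
        have a1: "\<kappa> * nJ * \<delta>0 \<le> \<kappa> * nJ * (r * c / (2 * C * \<kappa> * nJ))"
          using \<delta>0(4) \<kappa>(1) nJ0 by (intro mult_left_mono) auto
        also have "\<dots> = r * c / (2 * C)" using \<kappa>(1) nJ0 by (simp add: field_simps)
        finally have a1: "\<kappa> * \<delta>0 * nJ \<le> r * c / (2 * C)" by (simp add: ac_simps)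
        have "(nJi + \<kappa> * \<delta>0) * \<rho> \<le> (nJi + \<kappa>) * \<rho>"
          using \<delta>0(2) \<kappa>(1) \<rho>0 by (intro mult_right_mono) auto
        also have "\<dots> = r * c / (2 * C)" unfolding \<rho>_def using nJ0 \<kappa>(1) cC(2) by (simp add: add_pos_pos less_imp_neq[symmetric])
        finally have "K1 \<le> r * c / C" using a1 unfolding K1_def by (simp add: field_simps)
        then show ?thesis using cC(2) by (simp add: field_simps)
      qed
      have contr: "nv (x - H *v G x - xs) \<le> r * nv (x - xs)"
      proof -
        have "nv (x - H *v G x - xs) \<le> C * norm (x - H *v G x - xs)" by (rule cC(4))
        also have "\<dots> \<le> C * (K1 * norm w)" using nz cC(2) by simp
        also have "\<dots> \<le> r * c * norm w" using K1 by (simp add: mult.assoc[symmetric] mult_right_mono)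
        also have "\<dots> \<le> r * nv w" using cC(3)[of w] r by (simp add: mult.assoc)
        finally show ?thesis unfolding w_def .
      qed
      have mx: "max (nv (F x - xs) powr d) (nv (x - xs) powr d) \<le> nv (x - xs) powr d"
      proof -
        have "nv (F x - xs) \<le> \<tau> * nv (x - xs)" using MM_rate xN1 A2_N1(2) by blast
        also have "\<dots> \<le> nv (x - xs)" using MM_tau nv0[of "x - xs"] by (simp add: mult_left_le_one_le)
        finally show ?thesis using A1_d nv0 by (auto intro: powr_mono2)
      qed
      have Hb: "normM M (Hbar F x H - Ji) \<le> (1 + \<alpha>1 * nv (x - xs) powr d) * normM M (H - Ji) + \<alpha>2 * nv (x - xs) powr d"
      proof -
        have "normM M (Hbar F x H - Ji) \<le> (1 + \<alpha>1 * max (nv (F x - xs) powr d) (nv (x - xs) powr d)) * normM M (H - Ji)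
            + \<alpha>2 * max (nv (F x - xs) powr d) (nv (x - xs) powr d)"
          using A2_ineq xN1 HN2 unfolding Ji_def J0_def by blast
        also have "\<dots> \<le> (1 + \<alpha>1 * nv (x - xs) powr d) * normM M (H - Ji) + \<alpha>2 * nv (x - xs) powr d"
          using mx A2_alpha nM0[of "H - Ji"]
          by (intro add_mono mult_right_mono mult_left_mono) auto
        finally show ?thesis .
      qed
      show ?thesis using xN1 HN2 contr Hb by blast
    qed
    define xk where "xk k = fst (qn_iter F x0 H0 k)" for k
    define Hk where "Hk k = snd (qn_iter F x0 H0 k)" for k
    have rec: "xk (Suc k) = xk k - Hk k *v G (xk k)" "Hk (Suc k) = Hbar F (xk k) (Hk k)" for k
      unfolding xk_def Hk_def G_def by (simp_all add: split_beta Let_def)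
    have x0': "xk 0 = x0" "Hk 0 = H0" unfolding xk_def Hk_def by simp_all
    define T where "T k = \<gamma> * E / (1 - q) * (1 - q ^ k)" for k
    have bnd: "normM M (H - Ji) \<le> \<delta>0" if "normM M (H - Ji) + 1 \<le> (\<eta>0 + 1) * exp (T k)" for H k
    proof -
      have "\<gamma> * E / (1 - q) \<le> (\<gamma> + 1) * E / (1 - q)" using E0 q by (simp add: divide_right_mono mult_right_mono)
      also have "\<dots> \<le> (\<gamma> + 1) * y0 / (1 - q)" using Ey q \<gamma>0 by (simp add: divide_right_mono mult_left_mono)
      also have "\<dots> = t"
      proof -
        have "\<gamma> + 1 \<noteq> 0" "1 - q \<noteq> 0" using q \<gamma>0 by auto
        then show ?thesis unfolding y0_def by simp
      qed
      finally have g: "\<gamma> * E / (1 - q) \<le> t" .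
      have qk: "0 \<le> 1 - q ^ k" "1 - q ^ k \<le> 1" using q by (auto simp: power_le_one)
      have "T k \<le> t" unfolding T_def using g qk E0 \<gamma>0 q
        by (smt (verit) divide_nonneg_pos mult_left_le mult_nonneg_nonneg)
      then have "exp (T k) \<le> 1 + a" using expt by (meson exp_le_cancel_iff order.trans)
      then have "(\<eta>0 + 1) * exp (T k) \<le> (\<delta> + 1) * (1 + a)" using \<eta>0 a0
        by (intro mult_mono) auto
      also have "\<dots> \<le> \<delta>0 + 1" unfolding \<delta>_def a_def using \<delta>0 by (auto simp: min_def field_simps)
      finally show ?thesis using that by simp
    qed
    have inv: "nv (xk k - xs) \<le> r ^ k * e0 \<and> nv (xk k - xs) powr d \<le> q ^ k * E
        \<and> normM M (Hk k - Ji) + 1 \<le> (\<eta>0 + 1) * exp (T k)" for k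
    proof (induction k)
      case 0
      show ?case using x0' \<eta>0 unfolding e0_def E_def \<eta>0_def T_def by simp
    next
      case (Suc k)
      have ek: "nv (xk k - xs) \<le> e0" using Suc r e0 by (smt (verit) mult_left_le_one_le power_le_one zero_le_power)
      have hk: "normM M (Hk k - Ji) \<le> \<delta>0" using bnd Suc by blast
      note st = step[OF ek hk]
      define p where "p = nv (xk k - xs) powr d"
      have p0: "0 \<le> p" unfolding p_def by simp
      have c1: "nv (xk (Suc k) - xs) \<le> r ^ Suc k * e0"
        using st Suc r unfolding rec by (smt (verit) mult.assoc mult_left_mono power_Suc)
      have c2: "nv (xk (Suc k) - xs) powr d \<le> q ^ Suc k * E"
      proof -
        have "nv (xk (Suc k) - xs) powr d \<le> (r * nv (xk k - xs)) powr d"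
          using st A1_d nv0 unfolding rec by (intro powr_mono2) auto
        also have "\<dots> = q * p" unfolding q_def p_def using r nv0 by (simp add: powr_mult)
        also have "\<dots> \<le> q * (q ^ k * E)" using Suc q unfolding p_def by (intro mult_left_mono) auto
        finally show ?thesis by simp
      qed
      have c3: "normM M (Hk (Suc k) - Ji) + 1 \<le> (\<eta>0 + 1) * exp (T (Suc k))"
      proof -
        define \<eta> where "\<eta> = normM M (Hk k - Ji)"
        have \<eta>n: "0 \<le> \<eta>" unfolding \<eta>_def by (rule nM0)
        have "normM M (Hk (Suc k) - Ji) + 1 \<le> (1 + \<alpha>1 * p) * \<eta> + \<alpha>2 * p + 1"
          using st unfolding rec p_def \<eta>_def by simp
        also have "\<dots> \<le> (1 + \<gamma> * p) * (\<eta> + 1)" unfolding \<gamma>_def using A2_alpha p0 \<eta>n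
          by (simp add: algebra_simps mult_nonneg_nonneg)
        also have "\<dots> \<le> exp (\<gamma> * p) * (\<eta> + 1)" using \<eta>n by (intro mult_right_mono) auto
        also have "\<dots> \<le> exp (\<gamma> * q ^ k * E) * ((\<eta>0 + 1) * exp (T k))"
          using Suc \<gamma>0 nM0[of "Hk k - Ji"] unfolding \<eta>_def p_def
          by (intro mult_mono) (auto simp: mult.assoc mult_left_mono)
        also have "\<dots> = (\<eta>0 + 1) * exp (\<gamma> * q ^ k * E + T k)" by (simp add: exp_add)
        also have "\<gamma> * q ^ k * E + T k = T (Suc k)" unfolding T_def using q by (simp add: field_simps)
        finally show ?thesis .
      qed
      show ?case using c1 c2 c3 by blast
    qed
    have ek: "nv (xk k - xs) \<le> e0" for k using inv[of k] r e0
      by (smt (verit) mult_left_le_one_le power_le_one zero_le_power)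
    have hk: "normM M (Hk k - Ji) \<le> \<delta>0" for k using bnd inv by blast
    note st = step[OF ek hk]
    show "fst (qn_iter F x0 H0 k) \<in> N1" for k
      using st[of k] unfolding xk_def Hk_def by blast
    show "snd (qn_iter F x0 H0 k) \<in> N2" for k
      using st[of k] unfolding xk_def Hk_def by blast
    show "nv (fst (qn_iter F x0 H0 (Suc k)) - xs) \<le> r * nv (fst (qn_iter F x0 H0 k) - xs)" for k
      using st[of k] rec[of k] unfolding xk_def Hk_def by simp
    show "(\<lambda>k. fst (qn_iter F x0 H0 k)) \<longlonglongrightarrow> xs"
    proof -
      have "(\<lambda>k. xk k - xs) \<longlonglongrightarrow> 0"
      proof (rule Lim_null_comparison)
        show "\<forall>\<^sub>F k in sequentially. norm (xk k - xs) \<le> r ^ k * (e0 / c)"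
        proof (intro always_eventually allI)
          fix k
          have "c * norm (xk k - xs) \<le> r ^ k * e0" using cC(3) inv[of k] by (meson order.trans)
          then show "norm (xk k - xs) \<le> r ^ k * (e0 / c)" using cC(1) by (simp add: field_simps)
        qed
        show "(\<lambda>k. r ^ k * (e0 / c)) \<longlonglongrightarrow> 0"
          using r by (intro tendsto_mult_left_zero LIMSEQ_power_zero) auto
      qed
      then show ?thesis unfolding xk_def by (simp add: Lim_null[symmetric])
    qed
    define B where "B = max (C * (nJi + \<kappa>) / c) (2 * C * nJ / c)"
    show "\<exists>B. \<forall>k. opnorm nv (snd (qn_iter F x0 H0 k)) \<le> B \<and> opnorm nv (matrix_inv (snd (qn_iter F x0 H0 k))) \<le> B"
    proof (intro exI[of _ B] allI conjI)
      fix k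
      define H where "H = Hk k"
      have hH: "normM M (H - Ji) \<le> \<delta>0" unfolding H_def by (rule hk)
      have HN2: "H \<in> N2" using st[of k] unfolding H_def by blast
      have Hd: "norm ((H - Ji) *v y) \<le> \<kappa> * \<delta>0 * norm y" for y
      proof -
        have "norm ((H - Ji) *v y) \<le> \<kappa> * normM M (H - Ji) * norm y" by (rule \<kappa>(2))
        also have "\<dots> \<le> \<kappa> * \<delta>0 * norm y" using hH \<kappa>(1) by (intro mult_right_mono mult_left_mono) auto
        finally show ?thesis .
      qed
      have conv: "nv z \<le> (C * L / c) * nv y" if "norm z \<le> L * norm y" "0 \<le> L" for z y L
      proof -
        have "nv z \<le> C * norm z" by (rule cC(4))
        also have "\<dots> \<le> C * (L * norm y)" using that(1) cC(2) by (intro mult_left_mono) auto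
        also have "\<dots> \<le> C * (L * (nv y / c))" using cC that by (intro mult_left_mono) (auto simp: field_simps)
        finally show ?thesis by (simp add: field_simps)
      qed
      have "nv (H *v y) \<le> (C * (nJi + \<kappa>) / c) * nv y" for y
      proof -
        have "H *v y = Ji *v y + (H - Ji) *v y" by (simp add: matrix_vector_mult_diff_rdistrib)
        then have "norm (H *v y) \<le> norm (Ji *v y) + norm ((H - Ji) *v y)"
          by (metis norm_triangle_ineq)
        also have "\<dots> \<le> nJi * norm y + \<kappa> * \<delta>0 * norm y"
          using nJib[of y] Hd[of y] by (rule add_mono)
        also have "\<kappa> * \<delta>0 * norm y \<le> \<kappa> * norm y"
          using \<delta>0(1,2) \<kappa>(1) by (intro mult_right_mono) (auto simp: mult_left_le)
        then have "nJi * norm y + \<kappa> * \<delta>0 * norm y \<le> (nJi + \<kappa>) * norm y"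
          by (simp add: distrib_right)
        finally show ?thesis by (rule conv) (use nJ0 \<kappa>(1) in linarith)
      qed
      then have hb1: "nv (H *v y) \<le> (C * (nJi + \<kappa>) / c) * nv y" for y .
      show "opnorm nv (snd (qn_iter F x0 H0 k)) \<le> B" unfolding Hk_def[symmetric] H_def[symmetric]
      proof (intro opnorm_le[OF nv] allI)
        fix y show "nv (H *v y) \<le> B * nv y"
          using hb1[of y] mult_right_mono[OF max.cobounded1[of "C * (nJi + \<kappa>) / c" "2 * C * nJ / c"] nv0[of y]] unfolding B_def by linarith
      qed
      have Hi: "H ** matrix_inv H = mat 1" using minv A2_N2(2) HN2 by blast
      have lo: "norm v \<le> 2 * nJ * norm (H *v v)" for v
      proof -
        have "v = J0 *v (Ji *v v)" using JJ(1) by (simp add: matrix_vector_mul_assoc)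
        then have n1: "norm v \<le> nJ * norm (Ji *v v)" using nJb[of "Ji *v v"] by simp
        have "Ji *v v = H *v v - (H - Ji) *v v" by (simp add: matrix_vector_mult_diff_rdistrib)
        then have "norm (Ji *v v) \<le> norm (H *v v) + norm ((H - Ji) *v v)"
          by (metis norm_triangle_ineq4)
        then have "norm (Ji *v v) \<le> norm (H *v v) + \<kappa> * \<delta>0 * norm v"
          using Hd[of v] by linarith
        then have "nJ * norm (Ji *v v) \<le> nJ * (norm (H *v v) + \<kappa> * \<delta>0 * norm v)"
          using nJ0 by (intro mult_left_mono) auto
        then have n2: "norm v \<le> nJ * norm (H *v v) + (nJ * \<kappa> * \<delta>0) * norm v"
          using n1 by (simp add: algebra_simps)
        have "nJ * \<kappa> * \<delta>0 \<le> 1 / 2"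
        proof -
          have "nJ * \<kappa> * \<delta>0 \<le> nJ * \<kappa> * (1 / (2 * \<kappa> * nJ))" using \<delta>0(5) nJ0 \<kappa>(1) by (intro mult_left_mono) auto
          also have "\<dots> = 1 / 2" using nJ0 \<kappa>(1) by simp
          finally show ?thesis .
        qed
        then have "(nJ * \<kappa> * \<delta>0) * norm v \<le> (1 / 2) * norm v"
          by (intro mult_right_mono) auto
        then show ?thesis using n2 by linarith
      qed
      have "nv (matrix_inv H *v y) \<le> (2 * C * nJ / c) * nv y" for y
      proof -
        have "H *v (matrix_inv H *v y) = y" using Hi by (simp add: matrix_vector_mul_assoc)
        then have "norm (matrix_inv H *v y) \<le> (2 * nJ) * norm y" using lo by metis
        then have "nv (matrix_inv H *v y) \<le> (C * (2 * nJ) / c) * nv y" by (rule conv) (use nJ0 in simp)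
        then show ?thesis by (simp add: ac_simps)
      qed
      then have hb2: "nv (matrix_inv H *v y) \<le> (2 * C * nJ / c) * nv y" for y .
      show "opnorm nv (matrix_inv (snd (qn_iter F x0 H0 k))) \<le> B" unfolding Hk_def[symmetric] H_def[symmetric]
      proof (intro opnorm_le[OF nv] allI)
        fix y show "nv (matrix_inv H *v y) \<le> B * nv y"
          using hb2[of y] mult_right_mono[OF max.cobounded2[of "2 * C * nJ / c" "C * (nJi + \<kappa>) / c"] nv0[of y]] unfolding B_def by linarith
      qed
    qed
  qed
qed

end
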